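(* Let $m\ge2$, $a\in(0,1/m)$, and $\Sigma=\Sigma_{HC}^+=\mathrm{cl}(\pi_a(X_a))\subset\{1,\ldots,2m\}^{\mathbb Z^+}$. The set of vertices of the follower set graph of $\Sigma$ is $\{\Theta^\xi:\xi \text{ a finite word (possibly empty) over }\{1,\ldots,m\}\}$, and the labeled edges of the graph are exactly: $\Theta^\xi\xrightarrow{i}\Theta^{\xi i}$ and $\Theta^{\xi i}\xrightarrow{i+m}\Theta^\xi$ for every finite word $\xi$ over $\{1,\ldots,m\}$ and every $i\in\{1,\ldots,m\}$; and $\Theta^\emptyset\xrightarrow{i}\Theta^\emptyset$ for every $i\in\{m+1,\ldots,2m\}$.
   Context: $F_a(x)=\frac{x-(i-1)a}{a}$ on $[(i-1)a,ia)$, $i\in\{1,\ldots,m\}$, and $F_a(x)=\frac{x-ma}{1-ma}$ on $[ma,1]$. $\Omega_i^+=[(i-1)a,ia)\times[0,1]$ for $i\le m$; $\Omega_i^+=[ma,1]\times[\frac{i-m-1}{m},\frac{i-m}{m})$ for $m+1\le i\le 2m-1$; $\Omega_{2m}^+=[ma,1]\times[\frac{m-1}{m},1]$. $f_a(x,y)=(F_a(x),\frac{y}{m}+\frac{i-1}{m})$ on $\Omega_i^+$ for $i\le m$, $f_a(x,y)=(F_a(x),my-i+m+1)$ on $\Omega_i^+$ for $i\ge m+1$. $X_a=\bigcap_{n\ge0}f_a^{-n}(\bigcup_i\mathrm{int}(\Omega_i^+))$ and $\pi_a(p)=(\omega_n)_{n\ge0}$ where $f_a^n(p)\in\mathrm{int}(\Omega^+_{\omega_n})$;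 closure in the product topology. For a one-sided subshift $\Sigma$ on a finite set $S$, $L(\Sigma)$ is the set of finite words (including the empty word $\emptyset$, with $\emptyset\xi=\xi\emptyset=\xi$) appearing in elements of $\Sigma$. For $\xi\in L(\Sigma)$ the follower set is $\Theta^\xi=\{\eta\in\Sigma:\xi\eta\in\Sigma\}$. The follower set graph of $\Sigma$ is the $S$-labeled directed graph whose vertices are the follower sets (as subsets of $\Sigma$), with a $\gamma$-labeled edge $\Theta^\xi\xrightarrow{\gamma}\Theta^\eta$ if and only if $\xi\gamma\in L(\Sigma)$ and $\Theta^\eta=\Theta^{\xi\gamma}$. *)

theory Defs
  imports "HOL-Analysis.Analysis"
begin

definition Omega :: "real \<Rightarrow> nat \<Rightarrow> nat \<Rightarrow> (real \<times> real) set" where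
  "Omega a m i =
     (if i \<le> m then {(real i - 1) * a ..< real i * a} \<times> {0..1}
      else if i \<le> 2*m - 1 then {real m * a .. 1} \<times> {(real i - real m - 1) / real m ..< (real i - real m) / real m}
      else {real m * a .. 1} \<times> {(real m - 1) / real m .. 1})"

definition F_map :: "real \<Rightarrow> nat \<Rightarrow> real \<Rightarrow> real" where
  "F_map a m x =
     (if x < real m * a then
        (let i = (THE i. i \<in> {1..m} \<and> x \<in> {(real i - 1) * a ..< real i * a})
         in (x - (real i - 1) * a) / a)
      else (x - real m * a) / (1 - real m * a))"

text \<open>The map f_a (its values outside the unit square are irrelevant).\<close>
definition f_map :: "real \<Rightarrow> nat \<Rightarrow> real \<times> real \<Rightarrow> real \<times> real" where
  "f_map a m p =
     (let i = (THE i. i \<in> {1..2*m} \<and> p \<in> Omega a m i)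
      in if i \<le> m then (F_map a m (fst p), snd p / real m + (real i - 1) / real m)
         else (F_map a m (fst p), real m * snd p - real i + real m + 1))"

definition X_set :: "real \<Rightarrow> nat \<Rightarrow> (real \<times> real) set" where
  "X_set a m = (\<Inter>n. (f_map a m ^^ n) -` (\<Union>i\<in>{1..2*m}. interior (Omega a m i)))"

definition pi_map :: "real \<Rightarrow> nat \<Rightarrow> real \<times> real \<Rightarrow> (nat \<Rightarrow> nat)" where
  "pi_map a m p = (\<lambda>n. THE i. i \<in> {1..2*m} \<and> (f_map a m ^^ n) p \<in> interior (Omega a m i))"

text \<open>Sigma_HC^+ : closure in the product topology (nat carries the discrete topology).\<close>
definition Sigma_HC :: "real \<Rightarrow> nat \<Rightarrow> (nat \<Rightarrow> nat) set" where
  "Sigma_HC a m = closure (pi_map a m ` X_set a m)"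

definition conc :: "nat list \<Rightarrow> (nat \<Rightarrow> nat) \<Rightarrow> (nat \<Rightarrow> nat)" where
  "conc xs \<eta> = (\<lambda>n. if n < length xs then xs ! n else \<eta> (n - length xs))"

definition lang :: "(nat \<Rightarrow> nat) set \<Rightarrow> nat list set" where
  "lang \<Sigma> = {xs. \<exists>\<omega>\<in>\<Sigma>. \<exists>k. \<forall>j<length xs. \<omega> (k + j) = xs ! j}"

definition follower :: "(nat \<Rightarrow> nat) set \<Rightarrow> nat list \<Rightarrow> (nat \<Rightarrow> nat) set" where
  "follower \<Sigma> \<xi> = {\<eta> \<in> \<Sigma>. conc \<xi> \<eta> \<in> \<Sigma>}"

definition fsg_vertices :: "(nat \<Rightarrow> nat) set \<Rightarrow> (nat \<Rightarrow> nat) set set" where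
  "fsg_vertices \<Sigma> = {follower \<Sigma> \<xi> | \<xi>. \<xi> \<in> lang \<Sigma>}"

definition fsg_edges :: "nat set \<Rightarrow> (nat \<Rightarrow> nat) set \<Rightarrow> ((nat \<Rightarrow> nat) set \<times> nat \<times> (nat \<Rightarrow> nat) set) set" where
  "fsg_edges S \<Sigma> = {(follower \<Sigma> \<xi>, \<gamma>, follower \<Sigma> \<eta>) | \<xi> \<gamma> \<eta>.
      \<xi> \<in> lang \<Sigma> \<and> \<eta> \<in> lang \<Sigma> \<and> \<gamma> \<in> S \<and> \<xi> @ [\<gamma>] \<in> lang \<Sigma> \<and>
      follower \<Sigma> \<eta> = follower \<Sigma> (\<xi> @ [\<gamma>])}"

end

theory Submission
  imports Defs
begin


definition shiftk :: "nat \<Rightarrow> (nat \<Rightarrow> nat) \<Rightarrow> (nat \<Rightarrow> nat)" where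
  "shiftk k \<omega> = (\<lambda>n. \<omega> (n + k))"

lemma conc_Nil[simp]: "conc [] \<eta> = \<eta>"
  by (simp add: conc_def)

lemma conc_append: "conc (xs @ ys) \<eta> = conc xs (conc ys \<eta>)"
  by (auto simp: conc_def nth_append fun_eq_iff)

lemma conc_Cons: "conc (x # xs) \<eta> = conc [x] (conc xs \<eta>)"
  using conc_append[of "[x]" xs] by simp

lemma shiftk_conc[simp]: "shiftk (length xs) (conc xs \<eta>) = \<eta>"
  by (simp add: shiftk_def conc_def fun_eq_iff)

lemma conc_shiftk: "(\<forall>n<length xs. \<omega> n = xs ! n) \<Longrightarrow> conc xs (shiftk (length xs) \<omega>) = \<omega>"
  by (auto simp: shiftk_def conc_def fun_eq_iff)

lemma conc_prefix: "n < length xs \<Longrightarrow> conc xs \<eta> n = xs ! n"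
  by (simp add: conc_def)

locale hcsys =
  fixes S :: "(nat \<Rightarrow> nat) set" and m :: nat
  assumes sh: "\<And>\<omega>. \<omega> \<in> S \<Longrightarrow> (\<lambda>n. \<omega> (Suc n)) \<in> S"
  and rng: "\<And>\<omega> n. \<omega> \<in> S \<Longrightarrow> \<omega> n \<in> {1..2*m}"
  and popc: "\<And>\<omega> j. \<omega> \<in> S \<Longrightarrow> j \<in> {m+1..2*m} \<Longrightarrow> conc [j] \<omega> \<in> S"
  and match: "\<And>\<omega> n. \<omega> \<in> S \<Longrightarrow> \<omega> n \<in> {1..m} \<Longrightarrow> \<omega> (Suc n) \<in> {m+1..2*m} \<Longrightarrow> \<omega> (Suc n) = \<omega> n + m"
  and ins: "\<And>\<xi> i \<eta>. set \<xi> \<subseteq> {1..m} \<Longrightarrow> i \<in> {1..m} \<Longrightarrow> conc \<xi> \<eta> \<in> S \<Longrightarrow> conc \<xi> (conc [i, i+m] \<eta>) \<in> S"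
  and del: "\<And>\<xi> i \<eta>. set \<xi> \<subseteq> {1..m} \<Longrightarrow> i \<in> {1..m} \<Longrightarrow> conc \<xi> (conc [i, i+m] \<eta>) \<in> S \<Longrightarrow> conc \<xi> \<eta> \<in> S"
  and ne: "S \<noteq> {}"
begin

lemma shk: "\<omega> \<in> S \<Longrightarrow> shiftk k \<omega> \<in> S"
proof (induction k)
  case 0 then show ?case by (simp add: shiftk_def)
next
  case (Suc k)
  have "shiftk (Suc k) \<omega> = (\<lambda>n. shiftk k \<omega> (Suc n))" by (simp add: shiftk_def fun_eq_iff)
  then show ?case using sh Suc by simp
qed

lemma tail: "conc w \<eta> \<in> S \<Longrightarrow> \<eta> \<in> S"
  using shk[of "conc w \<eta>" "length w"] by simp

lemma lang_iff: "w \<in> lang S \<longleftrightarrow> follower S w \<noteq> {}"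
proof
  assume "w \<in> lang S"
  then obtain \<omega> k where \<omega>: "\<omega> \<in> S" "\<forall>j<length w. \<omega> (k + j) = w ! j"
    unfolding lang_def by blast
  define \<zeta> where "\<zeta> = shiftk k \<omega>"
  have z: "\<zeta> \<in> S" using shk \<omega> \<zeta>_def by simp
  have "\<forall>n<length w. \<zeta> n = w ! n" using \<omega>(2) by (simp add: \<zeta>_def shiftk_def add.commute)
  then have "conc w (shiftk (length w) \<zeta>) = \<zeta>" by (rule conc_shiftk)
  then have "shiftk (length w) \<zeta> \<in> follower S w"
    using z shk unfolding follower_def by auto
  then show "follower S w \<noteq> {}" by blast
next
  assume "follower S w \<noteq> {}"
  then obtain \<eta> where "conc w \<eta> \<in> S" unfolding follower_def by blast
  then show "w \<in> lang S" unfolding lang_def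
    by (intro CollectI bexI[of _ "conc w \<eta>"] exI[of _ 0]) (auto simp: conc_prefix)
qed

lemma foll_snoc: "follower S (w @ [g]) = {\<eta> \<in> S. conc [g] \<eta> \<in> follower S w}"
  unfolding follower_def using tail by (auto simp: conc_append)

lemma foll_cong: "follower S w = follower S v \<Longrightarrow> follower S (w @ [g]) = follower S (v @ [g])"
  by (simp add: foll_snoc)

lemma foll_Nil: "follower S [] = S"
  by (simp add: follower_def)

lemma foll_pop: "j \<in> {m+1..2*m} \<Longrightarrow> follower S [j] = follower S []"
proof -
  assume j: "j \<in> {m+1..2*m}"
  have "\<And>\<eta>. \<eta> \<in> S \<Longrightarrow> conc [j] \<eta> \<in> S" using popc[OF _ j] by blast
  then show ?thesis unfolding follower_def by auto
qed

lemma foll_pair: "set \<xi> \<subseteq> {1..m} \<Longrightarrow> i \<in> {1..m} \<Longrightarrow> follower S (\<xi> @ [i, i+m]) = follower S \<xi>"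
proof -
  assume a: "set \<xi> \<subseteq> {1..m}" "i \<in> {1..m}"
  have "\<And>\<eta>. conc \<xi> (conc [i, i+m] \<eta>) \<in> S \<longleftrightarrow> conc \<xi> \<eta> \<in> S"
    using ins[OF a] del[OF a] by blast
  then show ?thesis unfolding follower_def by (simp add: conc_append)
qed

lemma lang_prefix: "w @ v \<in> lang S \<Longrightarrow> w \<in> lang S"
proof -
  assume "w @ v \<in> lang S"
  then obtain \<omega> k where \<omega>: "\<omega> \<in> S" "\<forall>j<length (w @ v). \<omega> (k + j) = (w @ v) ! j"
    unfolding lang_def by blast
  then have "\<forall>j<length w. \<omega> (k + j) = w ! j" by (simp add: nth_append)
  then show ?thesis unfolding lang_def using \<omega>(1) by blast
qed

lemma lang_rng: "w @ [g] \<in> lang S \<Longrightarrow> g \<in> {1..2*m}"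
proof -
  assume "w @ [g] \<in> lang S"
  then obtain \<omega> k where \<omega>: "\<omega> \<in> S" "\<forall>j<length (w @ [g]). \<omega> (k + j) = (w @ [g]) ! j"
    unfolding lang_def by blast
  then have "\<omega> (k + length w) = g" by (simp add: nth_append)
  then show ?thesis using rng[OF \<omega>(1), of "k + length w"] by simp
qed

lemma lang_match: assumes "\<xi> @ [i, g] \<in> lang S" "i \<in> {1..m}" "g \<in> {m+1..2*m}"
  shows "g = i + m"
proof -
  obtain \<omega> k where \<omega>: "\<omega> \<in> S" "\<forall>j<length (\<xi> @ [i, g]). \<omega> (k + j) = (\<xi> @ [i, g]) ! j"
    using assms(1) unfolding lang_def by blast
  have a: "\<omega> (k + length \<xi>) = i" using \<omega>(2)[rule_format, of "length \<xi>"] by (simp add: nth_append)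
  have b: "\<omega> (Suc (k + length \<xi>)) = g" using \<omega>(2)[rule_format, of "Suc (length \<xi>)"] by (simp add: nth_append)
  show ?thesis using match[OF \<omega>(1), of "k + length \<xi>"] a b assms by simp
qed

lemma push_nonempty: "set \<xi> \<subseteq> {1..m} \<Longrightarrow> follower S \<xi> \<noteq> {}"
proof (induction \<xi> rule: rev_induct)
  case Nil then show ?case using ne foll_Nil by simp
next
  case (snoc i \<xi>)
  then have "follower S (\<xi> @ [i, i+m]) \<noteq> {}" using foll_pair by simp
  then have "(\<xi> @ [i]) @ [i+m] \<in> lang S" using lang_iff by simp
  then have "\<xi> @ [i] \<in> lang S" by (rule lang_prefix)
  then show ?case using lang_iff by simp
qed

lemma reduce: "w \<in> lang S \<Longrightarrow> \<exists>\<xi>. set \<xi> \<subseteq> {1..m} \<and> follower S w = follower S \<xi>"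
proof (induction w rule: rev_induct)
  case Nil then show ?case by (intro exI[of _ "[]"]) simp
next
  case (snoc g w)
  then obtain \<xi> where \<xi>: "set \<xi> \<subseteq> {1..m}" "follower S w = follower S \<xi>"
    using lang_prefix by blast
  have e: "follower S (w @ [g]) = follower S (\<xi> @ [g])" using foll_cong \<xi>(2) by blast
  have gr: "g \<in> {1..2*m}" using lang_rng snoc.prems by blast
  have l: "\<xi> @ [g] \<in> lang S" using e snoc.prems lang_iff by simp
  show ?case
  proof (cases "g \<le> m")
    case True then show ?thesis using e \<xi> gr by (intro exI[of _ "\<xi> @ [g]"]) auto
  next
    case False
    then have gp: "g \<in> {m+1..2*m}" using gr by auto
    show ?thesis
    proof (cases \<xi> rule: rev_cases)
      case Nil then show ?thesis using e foll_pop[OF gp] by (intro exI[of _ "[]"]) simp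
    next
      case (snoc \<xi>' i)
      have i: "i \<in> {1..m}" using \<xi>(1) snoc by auto
      have "\<xi>' @ [i, g] \<in> lang S" using l snoc by simp
      then have "g = i + m" using lang_match i gp by blast
      then have "follower S (w @ [g]) = follower S \<xi>'"
        using e snoc foll_pair[of \<xi>' i] \<xi>(1) i by simp
      then show ?thesis using \<xi>(1) snoc by (intro exI[of _ \<xi>']) simp
    qed
  qed
qed

theorem main:
  "fsg_vertices S = {follower S \<xi> | \<xi>. set \<xi> \<subseteq> {1..m}}
   \<and> fsg_edges {1..2*m} S =
           {(follower S \<xi>, i, follower S (\<xi> @ [i])) | \<xi> i.
               set \<xi> \<subseteq> {1..m} \<and> i \<in> {1..m}}
         \<union> {(follower S (\<xi> @ [i]), i + m, follower S \<xi>) | \<xi> i.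
               set \<xi> \<subseteq> {1..m} \<and> i \<in> {1..m}}
         \<union> {(follower S [], i, follower S []) | i.
               i \<in> {m+1..2*m}}"
proof
  show "fsg_vertices S = {follower S \<xi> | \<xi>. set \<xi> \<subseteq> {1..m}}"
  proof (rule set_eqI)
    fix V
    show "V \<in> fsg_vertices S \<longleftrightarrow> V \<in> {follower S \<xi> | \<xi>. set \<xi> \<subseteq> {1..m}}"
    proof
      assume "V \<in> fsg_vertices S"
      then obtain w where w: "V = follower S w" "w \<in> lang S" unfolding fsg_vertices_def by blast
      obtain \<xi> where "set \<xi> \<subseteq> {1..m}" "follower S w = follower S \<xi>" using reduce[OF w(2)] by blast
      then show "V \<in> {follower S \<xi> | \<xi>. set \<xi> \<subseteq> {1..m}}" using w(1) by blast
    next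
      assume "V \<in> {follower S \<xi> | \<xi>. set \<xi> \<subseteq> {1..m}}"
      then obtain \<xi> where x: "V = follower S \<xi>" "set \<xi> \<subseteq> {1..m}" by blast
      then have "\<xi> \<in> lang S" using push_nonempty lang_iff by blast
      then show "V \<in> fsg_vertices S" unfolding fsg_vertices_def using x(1) by blast
    qed
  qed
next
  let ?E1 = "{(follower S \<xi>, i, follower S (\<xi> @ [i])) | \<xi> i. set \<xi> \<subseteq> {1..m} \<and> i \<in> {1..m}}"
  let ?E2 = "{(follower S (\<xi> @ [i]), i + m, follower S \<xi>) | \<xi> i. set \<xi> \<subseteq> {1..m} \<and> i \<in> {1..m}}"
  let ?E3 = "{(follower S [], i, follower S []) | i. i \<in> {m+1..2*m}}"
  show "fsg_edges {1..2*m} S = ?E1 \<union> ?E2 \<union> ?E3"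
  proof (rule set_eqI)
    fix e
    show "e \<in> fsg_edges {1..2*m} S \<longleftrightarrow> e \<in> ?E1 \<union> ?E2 \<union> ?E3"
    proof
      assume "e \<in> fsg_edges {1..2*m} S"
      then obtain w g v where ev: "e = (follower S w, g, follower S v)" "w \<in> lang S" "v \<in> lang S"
        "g \<in> {1..2*m}" "w @ [g] \<in> lang S" "follower S v = follower S (w @ [g])"
        unfolding fsg_edges_def by blast
      obtain \<xi> where \<xi>: "set \<xi> \<subseteq> {1..m}" "follower S w = follower S \<xi>"
        using reduce[OF ev(2)] by blast
      have e2: "follower S v = follower S (\<xi> @ [g])" using foll_cong[OF \<xi>(2), of g] ev(6) by simp
      have "follower S v \<noteq> {}" using ev(3) lang_iff by blast
      then have l: "\<xi> @ [g] \<in> lang S" using e2 lang_iff by simp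
      show "e \<in> ?E1 \<union> ?E2 \<union> ?E3"
      proof (cases "g \<le> m")
        case True
        then have g1: "g \<in> {1..m}" using ev(4) by simp
        have "e = (follower S \<xi>, g, follower S (\<xi> @ [g]))" using ev(1) \<xi>(2) e2 by simp
        then have "e \<in> ?E1" using g1 \<xi>(1) by blast
        then show ?thesis by blast
      next
        case False
        then have gp: "g \<in> {m+1..2*m}" using ev(4) by auto
        show ?thesis
        proof (cases \<xi> rule: rev_cases)
          case Nil
          have "e = (follower S [], g, follower S [])" using ev(1) \<xi>(2) e2 foll_pop[OF gp] Nil by simp
          then have "e \<in> ?E3" using gp by blast
          then show ?thesis by blast
        next
          case (snoc \<xi>' i)
          have i: "i \<in> {1..m}" using \<xi>(1) snoc by auto
          have "\<xi>' @ [i, g] \<in> lang S" using l snoc by simp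
          then have gi: "g = i + m" using lang_match i gp by blast
          then have "follower S v = follower S \<xi>'"
            using e2 snoc foll_pair[of \<xi>' i] \<xi>(1) i by simp
          then have "e = (follower S (\<xi>' @ [i]), i + m, follower S \<xi>')" using ev(1) \<xi>(2) snoc gi by simp
          moreover have "set \<xi>' \<subseteq> {1..m}" using \<xi>(1) snoc by simp
          ultimately have "e \<in> ?E2" using i by blast
          then show ?thesis by blast
        qed
      qed
    next
      assume "e \<in> ?E1 \<union> ?E2 \<union> ?E3"
      then consider (a) "e \<in> ?E1" | (b) "e \<in> ?E2" | (c) "e \<in> ?E3" by blast
      then show "e \<in> fsg_edges {1..2*m} S"
      proof cases
        case a
        then obtain \<xi> i where x: "e = (follower S \<xi>, i, follower S (\<xi> @ [i]))" "set \<xi> \<subseteq> {1..m}" "i \<in> {1..m}"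
          by blast
        have l1: "\<xi> \<in> lang S" using push_nonempty lang_iff x by blast
        have l2: "\<xi> @ [i] \<in> lang S" using push_nonempty[of "\<xi> @ [i]"] lang_iff x by auto
        show ?thesis unfolding fsg_edges_def using x l1 l2
          by (intro CollectI exI[of _ "\<xi>"] exI[of _ "i"] exI[of _ "\<xi> @ [i]"]) auto
      next
        case b
        then obtain \<xi> i where x: "e = (follower S (\<xi> @ [i]), i + m, follower S \<xi>)" "set \<xi> \<subseteq> {1..m}" "i \<in> {1..m}"
          by blast
        have f: "follower S ((\<xi> @ [i]) @ [i+m]) = follower S \<xi>" using foll_pair x by simp
        have "\<xi> \<in> lang S" using push_nonempty lang_iff x by blast
        moreover have "\<xi> @ [i] \<in> lang S" using push_nonempty[of "\<xi> @ [i]"] lang_iff x by auto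
        moreover have "(\<xi> @ [i]) @ [i+m] \<in> lang S" using f push_nonempty[of \<xi>] lang_iff x by auto
        ultimately show ?thesis unfolding fsg_edges_def using x f
          by (intro CollectI exI[of _ "\<xi> @ [i]"] exI[of _ "i+m"] exI[of _ \<xi>]) auto
      next
        case c
        then obtain i where x: "e = (follower S [], i, follower S [])" "i \<in> {m+1..2*m}" by blast
        have f: "follower S ([] @ [i]) = follower S []" using foll_pop x by simp
        have "[] \<in> lang S" using push_nonempty[of "[]"] lang_iff by auto
        moreover have "[] @ [i] \<in> lang S" using f push_nonempty[of "[]"] lang_iff by auto
        ultimately show ?thesis unfolding fsg_edges_def using x f
          by (intro CollectI exI[of _ "[]"] exI[of _ i] exI[of _ "[]"]) auto
      qed
    qed
  qed
qed

end


definition IP :: "real \<Rightarrow> nat \<Rightarrow> nat \<Rightarrow> (real \<times> real) set" where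
  "IP a m j = (if j \<le> m then {(real j - 1) * a <..< real j * a} \<times> {0<..<1}
     else {real m * a <..< 1} \<times> {(real j - real m - 1) / real m <..< (real j - real m) / real m})"

locale dyn =
  fixes a :: real and m :: nat
  assumes m2: "m \<ge> 2" and apos: "0 < a" and asmall: "a < 1 / real m"
begin

lemma ma1: "real m * a < 1"
  using asmall m2 by (simp add: field_simps)

lemma mpos: "real m > 0" using m2 by simp

lemma int_Omega: "j \<in> {1..2*m} \<Longrightarrow> interior (Omega a m j) = IP a m j"
proof -
  assume j: "j \<in> {1..2*m}"
  consider "j \<le> m" | "\<not> j \<le> m" "j \<le> 2*m - 1" | "j = 2*m" using j by force
  then show ?thesis
  proof cases
    case 1 then show ?thesis
      by (simp add: Omega_def IP_def interior_Times interior_atLeastLessThan interior_atLeastAtMost_real)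
  next
    case 2 then show ?thesis
      by (simp add: Omega_def IP_def interior_Times interior_atLeastLessThan interior_atLeastAtMost_real)
  next
    case 3
    then have "\<not> j \<le> m" "\<not> j \<le> 2*m - 1" using m2 by auto
    moreover have e1: "(real j - real m - 1) / real m = (real m - 1) / real m" using 3 by simp
    moreover have e2: "(real j - real m) / real m = 1" using 3 mpos by simp
    ultimately have "IP a m j = {real m * a <..< 1} \<times> {(real m - 1) / real m <..< 1}"
      unfolding IP_def by (simp only: e1 e2 if_False)
    moreover have "Omega a m j = {real m * a .. 1} \<times> {(real m - 1) / real m .. 1}"
      unfolding Omega_def using \<open>\<not> j \<le> m\<close> \<open>\<not> j \<le> 2*m - 1\<close> by (simp only: if_False)
    ultimately show ?thesis
      by (simp add: interior_Times interior_atLeastLessThan interior_atLeastAtMost_real)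
  qed
qed

lemma IP_sub: "j \<in> {1..2*m} \<Longrightarrow> IP a m j \<subseteq> Omega a m j"
  using int_Omega interior_subset by blast

lemma IP_coords: "j \<in> {1..2*m} \<Longrightarrow> p \<in> IP a m j \<Longrightarrow> 0 < fst p \<and> fst p < 1 \<and> 0 < snd p \<and> snd p < 1"
proof -
  assume j: "j \<in> {1..2*m}" and p: "p \<in> IP a m j"
  show ?thesis
  proof (cases "j \<le> m")
    case True
    then have p': "(real j - 1) * a < fst p" "fst p < real j * a" "0 < snd p" "snd p < 1"
      using p by (auto simp: IP_def)
    have "0 \<le> (real j - 1) * a" using j apos by simp
    moreover have "real j * a \<le> real m * a" using True apos by (simp add: mult_right_mono)
    ultimately show ?thesis using p' ma1 by linarith
  next
    case False
    then have p': "real m * a < fst p" "fst p < 1"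
       "(real j - real m - 1) / real m < snd p" "snd p < (real j - real m) / real m"
      using p by (auto simp: IP_def)
    have "0 \<le> (real j - real m - 1) / real m" using False mpos by simp
    moreover have "(real j - real m) / real m \<le> 1" using j mpos by (simp add: field_simps)
    moreover have "0 \<le> real m * a" using apos by simp
    ultimately show ?thesis using p' by linarith
  qed
qed

lemma nat_between: "real i - 1 < real j \<Longrightarrow> real j - 1 < real i \<Longrightarrow> i = (j::nat)"
  by linarith

lemma IP_unique: assumes "i \<in> {1..2*m}" "j \<in> {1..2*m}" "p \<in> IP a m j" "p \<in> Omega a m i"
  shows "i = j"
proof -
  obtain x y where xy: "p = (x, y)" by fastforce
  show ?thesis
  proof (cases "j \<le> m")
    case True
    then have x: "(real j - 1) * a < x" "x < real j * a" using assms(3) xy by (auto simp: IP_def)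
    show ?thesis
    proof (cases "i \<le> m")
      case True
      then have "(real i - 1) * a \<le> x" "x < real i * a" using assms(4) xy by (auto simp: Omega_def)
      then have "(real i - 1) * a < real j * a" "(real j - 1) * a < real i * a" using x by linarith+
      then have "real i - 1 < real j" "real j - 1 < real i" using apos by auto
      then show ?thesis by (rule nat_between)
    next
      case False
      then have "real m * a \<le> x" using assms(4) xy by (auto simp: Omega_def split: if_splits)
      moreover have "real j * a \<le> real m * a" using \<open>j \<le> m\<close> apos by (simp add: mult_right_mono)
      ultimately show ?thesis using x by linarith
    qed
  next
    case False
    then have x: "real m * a < x" and y: "(real j - real m - 1) / real m < y" "y < (real j - real m) / real m"
      using assms(3) xy by (auto simp: IP_def)
    show ?thesis
    proof (cases "i \<le> m")
      case True
      then have "x < real i * a" using assms(4) xy by (auto simp: Omega_def)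
      moreover have "real i * a \<le> real m * a" using True apos by (simp add: mult_right_mono)
      ultimately show ?thesis using x by linarith
    next
      case False
      have yi: "(real i - real m - 1) / real m \<le> y" "y \<le> (real i - real m) / real m"
      proof -
        show "(real i - real m - 1) / real m \<le> y"
        proof (cases "i \<le> 2*m - 1")
          case True then show ?thesis using assms(4) xy False by (auto simp: Omega_def)
        next
          case F2: False
          then have "i = 2*m" using assms(1) by auto
          then have "(real i - real m - 1) / real m = (real m - 1) / real m" by simp
          moreover have "(real m - 1) / real m \<le> y" using assms(4) xy False F2 by (auto simp: Omega_def)
          ultimately show ?thesis by (simp only:)
        qed
        show "y \<le> (real i - real m) / real m"
        proof (cases "i \<le> 2*m - 1")
          case True then show ?thesis using assms(4) xy False by (auto simp: Omega_def)
        next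
          case F2: False
          then have "i = 2*m" using assms(1) by auto
          then have "(real i - real m) / real m = 1" using mpos by simp
          moreover have "y \<le> 1" using assms(4) xy False F2 by (auto simp: Omega_def)
          ultimately show ?thesis by (simp only:)
        qed
      qed
      have "(real i - real m - 1) / real m < (real j - real m) / real m"
           "(real j - real m - 1) / real m < (real i - real m) / real m"
        using yi y by linarith+
      then have "real i - real m - 1 < real j - real m" "real j - real m - 1 < real i - real m"
        using mpos by (simp_all add: divide_strict_right_mono_neg divide_less_cancel)
      then show ?thesis by (intro nat_between) linarith+
    qed
  qed
qed

lemma F_push: assumes "i \<in> {1..m}" "(real i - 1)*a < x" "x < real i * a"
  shows "F_map a m x = (x - (real i - 1)*a)/a"
proof -
  have "real i * a \<le> real m * a" using assms(1) apos by (simp add: mult_right_mono)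
  then have xl: "x < real m * a" using assms(3) by linarith
  have "(THE i. i \<in> {1..m} \<and> x \<in> {(real i - 1) * a ..< real i * a}) = i"
  proof (rule the_equality)
    show "i \<in> {1..m} \<and> x \<in> {(real i - 1) * a ..< real i * a}" using assms by simp
  next
    fix i' assume "i' \<in> {1..m} \<and> x \<in> {(real i' - 1) * a ..< real i' * a}"
    then have "(real i' - 1) * a < real i * a" "(real i - 1) * a < real i' * a" using assms by auto
    then have "real i' - 1 < real i" "real i - 1 < real i'" using apos by auto
    then show "i' = i" by (rule nat_between)
  qed
  then show ?thesis using xl by (simp add: F_map_def Let_def)
qed

lemma F_pop: "real m * a \<le> x \<Longrightarrow> F_map a m x = (x - real m * a)/(1 - real m * a)"
  by (simp add: F_map_def)

lemma Omega_THE: assumes "j \<in> {1..2*m}" "p \<in> IP a m j"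
  shows "(THE i. i \<in> {1..2*m} \<and> p \<in> Omega a m i) = j"
proof (rule the_equality)
  show "j \<in> {1..2*m} \<and> p \<in> Omega a m j" using assms IP_sub by blast
next
  fix i assume "i \<in> {1..2*m} \<and> p \<in> Omega a m i"
  then show "i = j" using IP_unique assms by blast
qed

lemma int_THE: assumes "j \<in> {1..2*m}" "p \<in> IP a m j"
  shows "(THE i. i \<in> {1..2*m} \<and> p \<in> interior (Omega a m i)) = j"
proof (rule the_equality)
  show "j \<in> {1..2*m} \<and> p \<in> interior (Omega a m j)" using assms int_Omega by blast
next
  fix i assume "i \<in> {1..2*m} \<and> p \<in> interior (Omega a m i)"
  then have "i \<in> {1..2*m}" "p \<in> Omega a m i" using interior_subset by blast+
  then show "i = j" using IP_unique assms by blast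
qed

lemma f_push: assumes "i \<in> {1..m}" "p \<in> IP a m i"
  shows "f_map a m p = ((fst p - (real i - 1)*a)/a, snd p / real m + (real i - 1)/real m)"
proof -
  have i2: "i \<in> {1..2*m}" using assms(1) by auto
  have "(real i - 1)*a < fst p" "fst p < real i * a" using assms by (auto simp: IP_def)
  then have "F_map a m (fst p) = (fst p - (real i - 1)*a)/a" using F_push assms(1) by blast
  then show ?thesis using Omega_THE[OF i2 assms(2)] assms(1) by (simp add: f_map_def Let_def)
qed

lemma f_pop: assumes "j \<in> {m+1..2*m}" "p \<in> IP a m j"
  shows "f_map a m p = ((fst p - real m * a)/(1 - real m * a), real m * snd p - real j + real m + 1)"
proof -
  have j2: "j \<in> {1..2*m}" using assms(1) by auto
  have "real m * a < fst p" using assms by (auto simp: IP_def)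
  then have "F_map a m (fst p) = (fst p - real m * a)/(1 - real m * a)" using F_pop by simp
  then show ?thesis using Omega_THE[OF j2 assms(2)] assms(1) by (simp add: f_map_def Let_def)
qed

lemma funpow_S: "(g ^^ Suc n) p = (g ^^ n) (g p)"
  by (metis comp_apply funpow_Suc_right)

lemma X_iff: "p \<in> X_set a m \<longleftrightarrow> (\<forall>n. \<exists>i\<in>{1..2*m}. (f_map a m ^^ n) p \<in> IP a m i)"
proof -
  have "\<And>q. q \<in> (\<Union>i\<in>{1..2*m}. interior (Omega a m i)) \<longleftrightarrow> (\<exists>i\<in>{1..2*m}. q \<in> IP a m i)"
    using int_Omega by auto
  then show ?thesis unfolding X_set_def by auto
qed

lemma pi_X: assumes "p \<in> X_set a m"
  shows "pi_map a m p n \<in> {1..2*m} \<and> (f_map a m ^^ n) p \<in> IP a m (pi_map a m p n)"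
proof -
  obtain i where i: "i \<in> {1..2*m}" "(f_map a m ^^ n) p \<in> IP a m i" using assms X_iff by blast
  have "pi_map a m p n = i" unfolding pi_map_def using int_THE[OF i] by simp
  then show ?thesis using i by simp
qed

lemma D1: assumes "p \<in> X_set a m"
  shows "f_map a m p \<in> X_set a m \<and> pi_map a m (f_map a m p) = (\<lambda>n. pi_map a m p (Suc n))"
proof
  show "f_map a m p \<in> X_set a m" using assms unfolding X_iff
    by (metis funpow_S)
  show "pi_map a m (f_map a m p) = (\<lambda>n. pi_map a m p (Suc n))"
    unfolding pi_map_def by (simp only: funpow_S)
qed

lemma D2: assumes "j \<in> {1..2*m}" "q \<in> IP a m j" "f_map a m q \<in> X_set a m"
  shows "q \<in> X_set a m \<and> pi_map a m q = conc [j] (pi_map a m (f_map a m q))"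
proof
  show "q \<in> X_set a m" unfolding X_iff
  proof
    fix n show "\<exists>i\<in>{1..2*m}. (f_map a m ^^ n) q \<in> IP a m i"
    proof (cases n)
      case 0 then show ?thesis using assms by auto
    next
      case (Suc k) then show ?thesis using assms(3) unfolding X_iff by (metis funpow_S)
    qed
  qed
  show "pi_map a m q = conc [j] (pi_map a m (f_map a m q))"
  proof
    fix n show "pi_map a m q n = conc [j] (pi_map a m (f_map a m q)) n"
    proof (cases n)
      case 0 then show ?thesis using int_THE[OF assms(1,2)] by (simp add: pi_map_def conc_def)
    next
      case (Suc k) then show ?thesis by (simp add: pi_map_def conc_def del: funpow.simps) (simp only: funpow_S)
    qed
  qed
qed

lemma X_coords: "p \<in> X_set a m \<Longrightarrow> 0 < fst p \<and> fst p < 1 \<and> 0 < snd p \<and> snd p < 1"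
proof -
  assume p: "p \<in> X_set a m"
  have "pi_map a m p 0 \<in> {1..2*m}" "p \<in> IP a m (pi_map a m p 0)" using pi_X[OF p, of 0] by auto
  then show ?thesis using IP_coords by blast
qed

lemma pop_prepend: assumes p: "p \<in> X_set a m" and j: "j \<in> {m+1..2*m}"
  shows "\<exists>q\<in>X_set a m. pi_map a m q = conc [j] (pi_map a m p)
           \<and> snd q = snd p / real m + (real j - real m - 1) / real m"
proof -
  obtain x y where xy: "p = (x, y)" by fastforce
  have c: "0 < x" "x < 1" "0 < y" "y < 1" using X_coords[OF p] xy by auto
  define q where "q = (real m * a + (1 - real m * a) * x, y / real m + (real j - real m - 1) / real m)"
  have k: "0 < 1 - real m * a" using ma1 by simp
  have "(1 - real m * a) * x > 0" using k c by simp
  moreover have "(1 - real m * a) * x < 1 - real m * a" using k c by simp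
  moreover have "y / real m > 0" using c mpos by simp
  moreover have "y / real m < 1 / real m" using c mpos by (simp add: divide_strict_right_mono)
  moreover have "(real j - real m) / real m = (real j - real m - 1) / real m + 1 / real m"
    using mpos by (simp add: diff_divide_distrib)
  moreover have "\<not> j \<le> m" using j by simp
  ultimately have qI: "q \<in> IP a m j" unfolding q_def IP_def by simp
  have "f_map a m q = ((real m * a + (1 - real m * a) * x - real m * a)/(1 - real m * a),
        real m * (y / real m + (real j - real m - 1) / real m) - real j + real m + 1)"
    using f_pop[OF j qI] by (simp add: q_def)
  also have "\<dots> = p" using k mpos xy by (simp add: field_simps)
  finally have fq: "f_map a m q = p" .
  have j2: "j \<in> {1..2*m}" using j by simp
  have "q \<in> X_set a m \<and> pi_map a m q = conc [j] (pi_map a m p)" using D2[OF j2 qI] fq p by simp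
  then show ?thesis using xy by (intro bexI[of _ q]) (auto simp: q_def)
qed

lemma push_prepend: assumes r: "r \<in> X_set a m" and i: "i \<in> {1..m}"
  and y1: "(real i - 1) / real m < snd r" and y2: "snd r < real i / real m"
  shows "\<exists>q\<in>X_set a m. pi_map a m q = conc [i] (pi_map a m r)
           \<and> snd q = real m * snd r - (real i - 1)"
proof -
  obtain x y where xy: "r = (x, y)" by fastforce
  have c: "0 < x" "x < 1" using X_coords[OF r] xy by auto
  have yy: "real i - 1 < real m * y" "real m * y < real i" using y1 y2 xy mpos by (auto simp: field_simps)
  define q where "q = ((real i - 1) * a + a * x, real m * y - (real i - 1))"
  have "a * x > 0" "a * x < a" using c apos by auto
  then have qI: "q \<in> IP a m i" unfolding q_def IP_def using i yy by (simp add: algebra_simps)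
  have "f_map a m q = (((real i - 1) * a + a * x - (real i - 1)*a)/a, (real m * y - (real i - 1)) / real m + (real i - 1)/real m)"
    using f_push[OF i qI] by (simp add: q_def)
  also have "\<dots> = r" using apos mpos xy by (simp add: field_simps)
  finally have fq: "f_map a m q = r" .
  have i2: "i \<in> {1..2*m}" using i by simp
  have "q \<in> X_set a m \<and> pi_map a m q = conc [i] (pi_map a m r)" using D2[OF i2 qI] fq r by simp
  then show ?thesis using xy by (intro bexI[of _ q]) (auto simp: q_def)
qed

lemma iter: "p \<in> X_set a m \<Longrightarrow> (f_map a m ^^ k) p \<in> X_set a m \<and> pi_map a m ((f_map a m ^^ k) p) = shiftk k (pi_map a m p)"
proof (induction k)
  case 0 then show ?case by (simp add: shiftk_def)
next
  case (Suc k)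
  then have h: "(f_map a m ^^ k) p \<in> X_set a m" "pi_map a m ((f_map a m ^^ k) p) = shiftk k (pi_map a m p)" by auto
  have e: "(f_map a m ^^ Suc k) p = f_map a m ((f_map a m ^^ k) p)" by simp
  show ?case unfolding e using D1[OF h(1)] h(2) by (simp add: shiftk_def)
qed

lemma push_y: assumes "i \<in> {1..m}" "p \<in> IP a m i"
  shows "snd (f_map a m p) = snd p / real m + (real i - 1) / real m
     \<and> (real i - 1) / real m < snd (f_map a m p) \<and> snd (f_map a m p) < real i / real m"
proof -
  have i2: "i \<in> {1..2*m}" using assms(1) by auto
  have c: "0 < snd p" "snd p < 1" using IP_coords[OF i2 assms(2)] by auto
  have e: "snd (f_map a m p) = snd p / real m + (real i - 1) / real m" using f_push[OF assms] by simp
  have "snd p / real m > 0" "snd p / real m < 1 / real m" using c mpos by (auto simp: divide_strict_right_mono)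
  moreover have "real i / real m = (real i - 1) / real m + 1 / real m" using mpos by (simp add: diff_divide_distrib)
  ultimately show ?thesis using e by linarith
qed

lemma splice: "p \<in> X_set a m \<Longrightarrow> set \<xi> \<subseteq> {1..m} \<Longrightarrow> (\<forall>n<length \<xi>. pi_map a m p n = \<xi> ! n)
  \<Longrightarrow> r \<in> X_set a m \<Longrightarrow> snd r = snd ((f_map a m ^^ length \<xi>) p)
  \<Longrightarrow> \<exists>q\<in>X_set a m. pi_map a m q = conc \<xi> (pi_map a m r) \<and> snd q = snd p"
proof (induction \<xi> arbitrary: p)
  case Nil then show ?case by (intro bexI[of _ r]) auto
next
  case (Cons j \<xi>')
  have j: "j \<in> {1..m}" using Cons.prems(2) by simp
  have pj: "pi_map a m p 0 = j" using Cons.prems(3) by auto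
  then have pI: "p \<in> IP a m j" using pi_X[OF Cons.prems(1), of 0] by simp
  have fp: "f_map a m p \<in> X_set a m" "pi_map a m (f_map a m p) = (\<lambda>n. pi_map a m p (Suc n))"
    using D1[OF Cons.prems(1)] by auto
  have "\<forall>n<length \<xi>'. pi_map a m (f_map a m p) n = \<xi>' ! n" using Cons.prems(3) fp(2) by auto
  moreover have "snd r = snd ((f_map a m ^^ length \<xi>') (f_map a m p))"
  proof -
    have "length (j # \<xi>') = Suc (length \<xi>')" by simp
    then show ?thesis using Cons.prems(5) funpow_S[where g="f_map a m" and n="length \<xi>'" and p=p] by simp
  qed
  ultimately obtain q' where q': "q' \<in> X_set a m" "pi_map a m q' = conc \<xi>' (pi_map a m r)"
     "snd q' = snd (f_map a m p)"
    using Cons.IH[OF fp(1)] Cons.prems by auto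
  have y: "snd q' = snd p / real m + (real j - 1) / real m"
     "(real j - 1) / real m < snd q'" "snd q' < real j / real m"
    using push_y[OF j pI] q'(3) by auto
  obtain q where q: "q \<in> X_set a m" "pi_map a m q = conc [j] (pi_map a m q')"
      "snd q = real m * snd q' - (real j - 1)"
    using push_prepend[OF q'(1) j y(2) y(3)] by blast
  have "snd q = snd p" using q(3) y(1) mpos by (simp add: field_simps)
  moreover have "pi_map a m q = conc (j # \<xi>') (pi_map a m r)" using q(2) q'(2) conc_Cons[of j \<xi>'] by simp
  ultimately show ?case using q(1) by blast
qed

lemma match_pt: assumes p: "p \<in> X_set a m" and i: "pi_map a m p n \<in> {1..m}"
  and j: "pi_map a m p (Suc n) \<in> {m+1..2*m}"
  shows "pi_map a m p (Suc n) = pi_map a m p n + m"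
proof -
  define i0 where "i0 = pi_map a m p n"
  define j0 where "j0 = pi_map a m p (Suc n)"
  have rI: "(f_map a m ^^ n) p \<in> IP a m i0" using pi_X[OF p, of n] i0_def by simp
  have "(f_map a m ^^ Suc n) p \<in> IP a m j0" using pi_X[OF p, of "Suc n"] j0_def by simp
  then have fI: "f_map a m ((f_map a m ^^ n) p) \<in> IP a m j0" by simp
  define y where "y = snd (f_map a m ((f_map a m ^^ n) p))"
  have y1: "(real i0 - 1) / real m < y" "y < real i0 / real m"
    using push_y[OF _ rI] i i0_def y_def by auto
  have "\<not> j0 \<le> m" using j j0_def by simp
  then have y2: "(real j0 - real m - 1) / real m < y" "y < (real j0 - real m) / real m"
    using fI y_def by (auto simp: IP_def mem_Times_iff)
  have "(real i0 - 1) / real m < (real j0 - real m) / real m" "(real j0 - real m - 1) / real m < real i0 / real m"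
    using y1 y2 by linarith+
  then have "real i0 - 1 < real j0 - real m" "real j0 - real m - 1 < real i0"
    using mpos by (simp_all add: divide_less_cancel)
  then have "j0 = i0 + m" by linarith
  then show ?thesis using i0_def j0_def by simp
qed

lemma ins_pt: assumes p: "p \<in> X_set a m" and xi: "set \<xi> \<subseteq> {1..m}" and i: "i \<in> {1..m}"
  and e: "pi_map a m p = conc \<xi> \<eta>"
  shows "\<exists>q\<in>X_set a m. pi_map a m q = conc \<xi> (conc [i, i+m] \<eta>)"
proof -
  define pk where "pk = (f_map a m ^^ length \<xi>) p"
  have pk: "pk \<in> X_set a m" "pi_map a m pk = \<eta>" using iter[OF p, of "length \<xi>"] e pk_def by auto
  have c: "0 < snd pk" "snd pk < 1" using X_coords[OF pk(1)] by auto
  have im: "i + m \<in> {m+1..2*m}" using i by simp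
  obtain r1 where r1: "r1 \<in> X_set a m" "pi_map a m r1 = conc [i+m] \<eta>"
    "snd r1 = snd pk / real m + (real (i+m) - real m - 1) / real m"
    using pop_prepend[OF pk(1) im] pk(2) by blast
  have y1: "snd r1 = snd pk / real m + (real i - 1) / real m" using r1(3) by simp
  have "snd pk / real m > 0" "snd pk / real m < 1 / real m" using c mpos by (auto simp: divide_strict_right_mono)
  moreover have "real i / real m = (real i - 1) / real m + 1 / real m" using mpos by (simp add: diff_divide_distrib)
  ultimately have b: "(real i - 1) / real m < snd r1" "snd r1 < real i / real m" using y1 by linarith+
  obtain r2 where r2: "r2 \<in> X_set a m" "pi_map a m r2 = conc [i] (pi_map a m r1)"
    "snd r2 = real m * snd r1 - (real i - 1)"
    using push_prepend[OF r1(1) i b] by blast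
  have "snd r2 = snd pk" using r2(3) y1 mpos by (simp add: field_simps)
  then have sr: "snd r2 = snd ((f_map a m ^^ length \<xi>) p)" using pk_def by simp
  have pre: "\<forall>n<length \<xi>. pi_map a m p n = \<xi> ! n" using e by (simp add: conc_prefix)
  obtain q where q: "q \<in> X_set a m" "pi_map a m q = conc \<xi> (pi_map a m r2)"
    using splice[OF p xi pre r2(1) sr] by blast
  have "pi_map a m r2 = conc [i, i+m] \<eta>" using r2(2) r1(2) conc_Cons[of i "[i+m]" \<eta>] by simp
  then show ?thesis using q by auto
qed

lemma del_pt: assumes p: "p \<in> X_set a m" and xi: "set \<xi> \<subseteq> {1..m}" and i: "i \<in> {1..m}"
  and e: "pi_map a m p = conc \<xi> (conc [i, i+m] \<eta>)"
  shows "\<exists>q\<in>X_set a m. pi_map a m q = conc \<xi> \<eta>"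
proof -
  define pk where "pk = (f_map a m ^^ length \<xi>) p"
  have pk: "pk \<in> X_set a m" "pi_map a m pk = conc [i, i+m] \<eta>" using iter[OF p, of "length \<xi>"] e pk_def by auto
  have pk0: "pi_map a m pk 0 = i" using pk(2) by (simp add: conc_def)
  then have pkI: "pk \<in> IP a m i" using pi_X[OF pk(1), of 0] by simp
  define p1 where "p1 = f_map a m pk"
  have p1: "p1 \<in> X_set a m" "pi_map a m p1 = (\<lambda>n. pi_map a m pk (Suc n))" using D1[OF pk(1)] p1_def by auto
  have "pi_map a m p1 0 = i + m" using p1(2) pk(2) by (simp add: conc_def)
  then have p1I: "p1 \<in> IP a m (i+m)" using pi_X[OF p1(1), of 0] by simp
  define p2 where "p2 = f_map a m p1"
  have p2: "p2 \<in> X_set a m" "pi_map a m p2 = (\<lambda>n. pi_map a m p1 (Suc n))" using D1[OF p1(1)] p2_def by auto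
  have "pi_map a m p2 = \<eta>" using p2(2) p1(2) pk(2) by (simp add: conc_def fun_eq_iff)
  have y1: "snd p1 = snd pk / real m + (real i - 1) / real m" using push_y[OF i pkI] p1_def by simp
  have im: "i + m \<in> {m+1..2*m}" using i by simp
  have "snd p2 = real m * snd p1 - real (i+m) + real m + 1" using f_pop[OF im p1I] p2_def by simp
  then have "snd p2 = snd pk" using y1 mpos by (simp add: field_simps)
  then have sr: "snd p2 = snd ((f_map a m ^^ length \<xi>) p)" using pk_def by simp
  have pre: "\<forall>n<length \<xi>. pi_map a m p n = \<xi> ! n" using e by (simp add: conc_prefix)
  obtain q where q: "q \<in> X_set a m" "pi_map a m q = conc \<xi> (pi_map a m p2)"
    using splice[OF p xi pre p2(1) sr] by blast
  then show ?thesis using \<open>pi_map a m p2 = \<eta>\<close> by auto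
qed

lemma X_ne: "X_set a m \<noteq> {}"
proof -
  define D where "D = 1 - a + real m * a * a"
  have k: "0 < 1 - real m * a" using ma1 by simp
  have "a * 1 \<le> a * real m" using m2 apos by (intro mult_left_mono) auto
  then have k2: "0 < 1 - a" using ma1 by (simp add: mult.commute)
  have Dp: "D > real m * a" unfolding D_def
  proof -
    have "(1 - a) * (1 - real m * a) > 0" using k k2 by simp
    then show "1 - a + real m * a * a > real m * a" by (simp add: algebra_simps)
  qed
  have "real m * a > 0" using apos mpos by simp
  then have Dpos: "D > 0" using Dp by linarith
  define x2 where "x2 = real m * a / D"
  define x1 where "x1 = a * x2"
  have x2a: "real m * a < x2"
  proof -
    have "real m * a * D < real m * a" unfolding D_def
    proof -
      have "real m * a * (1 - a + real m * a * a) = real m * a - real m * a * (a * (1 - real m * a))"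
        by (simp add: algebra_simps)
      moreover have "real m * a * (a * (1 - real m * a)) > 0" using mpos apos k by simp
      ultimately show "real m * a * (1 - a + real m * a * a) < real m * a" by linarith
    qed
    then show ?thesis unfolding x2_def using Dpos by (simp add: field_simps)
  qed
  have x2b: "x2 < 1" unfolding x2_def using Dp Dpos by simp
  have x2p: "0 < x2" using x2a \<open>real m * a > 0\<close> by linarith
  have x1a: "0 < x1" "x1 < a" unfolding x1_def using x2p x2b apos
    by (simp, simp add: mult_less_cancel_left1)
  define p0 where "p0 = (x1, 1/2 :: real)"
  define p1 where "p1 = (x2, 1 / (2 * real m))"
  have p0I: "p0 \<in> IP a m 1" unfolding p0_def IP_def using x1a m2 by simp
  have "1 / (2 * real m) < 1 / real m" using mpos by (simp add: field_simps)
  then have p1I: "p1 \<in> IP a m (m+1)" unfolding p1_def IP_def using x2a x2b mpos by simp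
  have one: "(1::nat) \<in> {1..m}" using m2 by simp
  have mm: "m + 1 \<in> {m+1..2*m}" using m2 by simp
  have f0: "f_map a m p0 = p1" using f_push[OF one p0I] x1_def apos unfolding p0_def p1_def by simp
  have "(x2 - real m * a) / (1 - real m * a) = x1"
  proof -
    have "x2 * D = real m * a" unfolding x2_def using Dpos by simp
    then have "x2 - real m * a = a * x2 * (1 - real m * a)" unfolding D_def by (simp add: algebra_simps)
    then show ?thesis unfolding x1_def using k by (simp add: field_simps)
  qed
  then have f1: "f_map a m p1 = p0" using f_pop[OF mm p1I] mpos unfolding p0_def p1_def by simp
  have "\<forall>n. (f_map a m ^^ n) p0 \<in> {p0, p1}"
  proof
    fix n show "(f_map a m ^^ n) p0 \<in> {p0, p1}"
    proof (induction n)
      case 0 then show ?case by simp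
    next
      case (Suc n)
      then consider "(f_map a m ^^ n) p0 = p0" | "(f_map a m ^^ n) p0 = p1" by blast
      then show ?case by cases (simp_all add: f0 f1)
    qed
  qed
  moreover have "(1::nat) \<in> {1..2*m}" "m + 1 \<in> {1..2*m}" using m2 by auto
  ultimately have "p0 \<in> X_set a m" unfolding X_iff using p0I p1I
    by (metis insertE singletonD)
  then show ?thesis by blast
qed

end


lemma closure_char:
  fixes A :: "(nat \<Rightarrow> nat) set"
  shows "\<omega> \<in> closure A \<longleftrightarrow> (\<forall>N. \<exists>\<alpha>\<in>A. \<forall>n<N. \<alpha> n = \<omega> n)"
proof
  assume H: "\<omega> \<in> closure A"
  show "\<forall>N. \<exists>\<alpha>\<in>A. \<forall>n<N. \<alpha> n = \<omega> n"
  proof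
    fix N
    have op: "open {f::nat\<Rightarrow>nat. \<forall>i\<in>{..<N}. f (id i) \<in> {\<omega> i}}"
      by (rule product_topology_basis') (auto simp: open_discrete)
    have "\<omega> \<in> {f::nat\<Rightarrow>nat. \<forall>i\<in>{..<N}. f (id i) \<in> {\<omega> i}}" by simp
    then have "{f::nat\<Rightarrow>nat. \<forall>i\<in>{..<N}. f (id i) \<in> {\<omega> i}} \<inter> A \<noteq> {}"
      using H op unfolding closure_iff_nhds_not_empty by blast
    then obtain \<alpha> where "\<alpha> \<in> A" "\<alpha> \<in> {f::nat\<Rightarrow>nat. \<forall>i\<in>{..<N}. f (id i) \<in> {\<omega> i}}"
      by blast
    then show "\<exists>\<alpha>\<in>A. \<forall>n<N. \<alpha> n = \<omega> n" by auto
  qed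
next
  assume H: "\<forall>N. \<exists>\<alpha>\<in>A. \<forall>n<N. \<alpha> n = \<omega> n"
  show "\<omega> \<in> closure A"
    unfolding closure_iff_nhds_not_empty
  proof (intro allI impI)
    fix T U assume "U \<subseteq> T" "open U" "\<omega> \<in> U"
    then have "open U \<and> \<omega> \<in> U" by simp
    then have "openin (product_topology (\<lambda>i. euclidean) UNIV) U" "\<omega> \<in> U"
      by (auto simp: open_fun_def)
    then obtain X where X: "\<omega> \<in> (\<Pi>\<^sub>E i\<in>UNIV. X i)" "finite {i. X i \<noteq> topspace (euclidean::nat topology)}"
       "(\<Pi>\<^sub>E i\<in>UNIV. X i) \<subseteq> U"
      using product_topology_open_contains_basis[of "\<lambda>i. euclidean" UNIV U \<omega>] by auto
    then have fin: "finite {i. X i \<noteq> UNIV}" by simp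
    obtain N where N0: "{i. X i \<noteq> UNIV} \<subseteq> {..<N}"
      using finite_nat_bounded[OF fin] by (elim exE)
    then have N: "\<forall>i\<in>{i. X i \<noteq> UNIV}. i < N" by auto
    obtain \<alpha> where \<alpha>: "\<alpha> \<in> A" "\<forall>n<N. \<alpha> n = \<omega> n" using H by blast
    have "\<alpha> \<in> (\<Pi>\<^sub>E i\<in>UNIV. X i)"
    proof -
      have "\<alpha> i \<in> X i" for i
      proof (cases "i < N")
        case True then show ?thesis using \<alpha> X(1) by (simp add: PiE_iff)
      next
        case False then show ?thesis using N by auto
      qed
      then show ?thesis by auto
    qed
    then show "A \<inter> T \<noteq> {}" using X(3) \<alpha>(1) \<open>U \<subseteq> T\<close> by blast
  qed
qed


context dyn begin

lemma cl_sh: "\<omega> \<in> Sigma_HC a m \<Longrightarrow> (\<lambda>n. \<omega> (Suc n)) \<in> Sigma_HC a m"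
  unfolding Sigma_HC_def closure_char
proof (intro allI)
  fix N assume H: "\<forall>N. \<exists>\<alpha>\<in>pi_map a m ` X_set a m. \<forall>n<N. \<alpha> n = \<omega> n"
  then obtain p where p: "p \<in> X_set a m" "\<forall>n<Suc N. pi_map a m p n = \<omega> n" by blast
  have "pi_map a m (f_map a m p) \<in> pi_map a m ` X_set a m" using D1[OF p(1)] by blast
  moreover have "\<forall>n<N. pi_map a m (f_map a m p) n = \<omega> (Suc n)" using D1[OF p(1)] p(2) by simp
  ultimately show "\<exists>\<alpha>\<in>pi_map a m ` X_set a m. \<forall>n<N. \<alpha> n = \<omega> (Suc n)" by blast
qed

lemma cl_rng: "\<omega> \<in> Sigma_HC a m \<Longrightarrow> \<omega> n \<in> {1..2*m}"
proof -
  assume "\<omega> \<in> Sigma_HC a m"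
  then obtain p where p: "p \<in> X_set a m" "\<forall>k<Suc n. pi_map a m p k = \<omega> k"
    unfolding Sigma_HC_def closure_char by blast
  then show ?thesis using pi_X[OF p(1), of n] by auto
qed

lemma cl_match: "\<omega> \<in> Sigma_HC a m \<Longrightarrow> \<omega> n \<in> {1..m} \<Longrightarrow> \<omega> (Suc n) \<in> {m+1..2*m} \<Longrightarrow> \<omega> (Suc n) = \<omega> n + m"
proof -
  assume "\<omega> \<in> Sigma_HC a m" "\<omega> n \<in> {1..m}" "\<omega> (Suc n) \<in> {m+1..2*m}"
  moreover obtain p where p: "p \<in> X_set a m" "\<forall>k<Suc (Suc n). pi_map a m p k = \<omega> k"
    using \<open>\<omega> \<in> Sigma_HC a m\<close> unfolding Sigma_HC_def closure_char by blast
  ultimately show ?thesis using match_pt[OF p(1), of n] by auto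
qed

lemma cl_pop: "\<omega> \<in> Sigma_HC a m \<Longrightarrow> j \<in> {m+1..2*m} \<Longrightarrow> conc [j] \<omega> \<in> Sigma_HC a m"
  unfolding Sigma_HC_def closure_char
proof (intro allI)
  fix N assume H: "\<forall>N. \<exists>\<alpha>\<in>pi_map a m ` X_set a m. \<forall>n<N. \<alpha> n = \<omega> n" and j: "j \<in> {m+1..2*m}"
  then obtain p where p: "p \<in> X_set a m" "\<forall>n<N. pi_map a m p n = \<omega> n" by blast
  obtain q where q: "q \<in> X_set a m" "pi_map a m q = conc [j] (pi_map a m p)"
    using pop_prepend[OF p(1) j] by blast
  have "\<forall>n<N. pi_map a m q n = conc [j] \<omega> n" using q(2) p(2) by (auto simp: conc_def)
  then show "\<exists>\<alpha>\<in>pi_map a m ` X_set a m. \<forall>n<N. \<alpha> n = conc [j] \<omega> n" using q(1) by blast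
qed

lemma cl_ins: assumes "set \<xi> \<subseteq> {1..m}" "i \<in> {1..m}" "conc \<xi> \<eta> \<in> Sigma_HC a m"
  shows "conc \<xi> (conc [i, i+m] \<eta>) \<in> Sigma_HC a m"
  unfolding Sigma_HC_def closure_char
proof (intro allI)
  fix N
  define k where "k = length \<xi>"
  obtain p where p: "p \<in> X_set a m" "\<forall>n<N+k+2. pi_map a m p n = conc \<xi> \<eta> n"
    using assms(3) unfolding Sigma_HC_def closure_char by blast
  have "\<forall>n<length \<xi>. pi_map a m p n = \<xi> ! n" using p(2) k_def by (simp add: conc_prefix)
  then have e: "pi_map a m p = conc \<xi> (shiftk k (pi_map a m p))" using conc_shiftk k_def by metis
  obtain q where q: "q \<in> X_set a m" "pi_map a m q = conc \<xi> (conc [i, i+m] (shiftk k (pi_map a m p)))"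
    using ins_pt[OF p(1) assms(1,2) e] by blast
  have "\<forall>n<N. pi_map a m q n = conc \<xi> (conc [i, i+m] \<eta>) n"
  proof (intro allI impI)
    fix n assume n: "n < N"
    consider "n < k" | "n = k" | "n = Suc k" | "\<not> n < k + 2" by linarith
    then show "pi_map a m q n = conc \<xi> (conc [i, i+m] \<eta>) n"
    proof cases
      case 1 then show ?thesis using q(2) k_def by (simp add: conc_def)
    next
      case 2 then show ?thesis using q(2) k_def by (simp add: conc_def)
    next
      case 3 then show ?thesis using q(2) k_def by (simp add: conc_def)
    next
      case 4
      note False = 4
      then have "pi_map a m p (n - 2) = conc \<xi> \<eta> (n - 2)" using p(2) n by simp
      then show ?thesis using q(2) k_def False by (simp add: conc_def shiftk_def)
    qed
  qed
  then show "\<exists>\<alpha>\<in>pi_map a m ` X_set a m. \<forall>n<N. \<alpha> n = conc \<xi> (conc [i, i+m] \<eta>) n" using q(1) by blast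
qed

lemma cl_del: assumes "set \<xi> \<subseteq> {1..m}" "i \<in> {1..m}" "conc \<xi> (conc [i, i+m] \<eta>) \<in> Sigma_HC a m"
  shows "conc \<xi> \<eta> \<in> Sigma_HC a m"
  unfolding Sigma_HC_def closure_char
proof (intro allI)
  fix N
  define k where "k = length \<xi>"
  obtain p where p: "p \<in> X_set a m" "\<forall>n<N+k+2. pi_map a m p n = conc \<xi> (conc [i, i+m] \<eta>) n"
    using assms(3) unfolding Sigma_HC_def closure_char by blast
  have ce: "conc \<xi> (conc [i, i+m] \<eta>) = conc (\<xi> @ [i, i+m]) \<eta>" by (simp only: conc_append)
  have pre: "\<forall>n<length (\<xi> @ [i, i+m]). pi_map a m p n = (\<xi> @ [i, i+m]) ! n"
  proof (intro allI impI)
    fix n assume n: "n < length (\<xi> @ [i, i+m])"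
    then have "n < N + k + 2" using k_def by simp
    then have "pi_map a m p n = conc (\<xi> @ [i, i+m]) \<eta> n" using p(2) ce by simp
    then show "pi_map a m p n = (\<xi> @ [i, i+m]) ! n" using conc_prefix[OF n] by simp
  qed
  have lk: "length (\<xi> @ [i, i+m]) = k + 2" using k_def by simp
  have "conc (\<xi> @ [i, i+m]) (shiftk (length (\<xi> @ [i, i+m])) (pi_map a m p)) = pi_map a m p"
    by (rule conc_shiftk[OF pre])
  then have "pi_map a m p = conc (\<xi> @ [i, i+m]) (shiftk (k+2) (pi_map a m p))"
    unfolding lk by simp
  then have e: "pi_map a m p = conc \<xi> (conc [i, i+m] (shiftk (k+2) (pi_map a m p)))"
    by (simp only: conc_append)
  obtain q where q: "q \<in> X_set a m" "pi_map a m q = conc \<xi> (shiftk (k+2) (pi_map a m p))"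
    using del_pt[OF p(1) assms(1,2) e] by blast
  have "\<forall>n<N. pi_map a m q n = conc \<xi> \<eta> n"
  proof (intro allI impI)
    fix n assume n: "n < N"
    show "pi_map a m q n = conc \<xi> \<eta> n"
    proof (cases "n < k")
      case True then show ?thesis using q(2) k_def by (simp add: conc_def)
    next
      case False
      then have ar: "Suc (Suc n) - length \<xi> = Suc (Suc (n - length \<xi>))" using k_def by simp
      have "pi_map a m p (n + 2) = conc \<xi> (conc [i, i+m] \<eta>) (n + 2)" using p(2) n by simp
      then show ?thesis using q(2) k_def False ar by (simp add: conc_def shiftk_def)
    qed
  qed
  then show "\<exists>\<alpha>\<in>pi_map a m ` X_set a m. \<forall>n<N. \<alpha> n = conc \<xi> \<eta> n" using q(1) by blast
qed

lemma cl_ne: "Sigma_HC a m \<noteq> {}"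
  unfolding Sigma_HC_def using X_ne closure_subset by blast

lemma hc: "hcsys (Sigma_HC a m) m"
proof
  show "\<And>\<omega>. \<omega> \<in> Sigma_HC a m \<Longrightarrow> (\<lambda>n. \<omega> (Suc n)) \<in> Sigma_HC a m" by (rule cl_sh)
  show "\<And>\<omega> n. \<omega> \<in> Sigma_HC a m \<Longrightarrow> \<omega> n \<in> {1..2*m}" by (rule cl_rng)
  show "\<And>\<omega> j. \<omega> \<in> Sigma_HC a m \<Longrightarrow> j \<in> {m+1..2*m} \<Longrightarrow> conc [j] \<omega> \<in> Sigma_HC a m" by (rule cl_pop)
  show "\<And>\<omega> n. \<omega> \<in> Sigma_HC a m \<Longrightarrow> \<omega> n \<in> {1..m} \<Longrightarrow> \<omega> (Suc n) \<in> {m+1..2*m} \<Longrightarrow> \<omega> (Suc n) = \<omega> n + m"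
    by (rule cl_match)
  show "\<And>\<xi> i \<eta>. set \<xi> \<subseteq> {1..m} \<Longrightarrow> i \<in> {1..m} \<Longrightarrow> conc \<xi> \<eta> \<in> Sigma_HC a m \<Longrightarrow> conc \<xi> (conc [i, i+m] \<eta>) \<in> Sigma_HC a m"
    by (rule cl_ins)
  show "\<And>\<xi> i \<eta>. set \<xi> \<subseteq> {1..m} \<Longrightarrow> i \<in> {1..m} \<Longrightarrow> conc \<xi> (conc [i, i+m] \<eta>) \<in> Sigma_HC a m \<Longrightarrow> conc \<xi> \<eta> \<in> Sigma_HC a m"
    by (rule cl_del)
  show "Sigma_HC a m \<noteq> {}" by (rule cl_ne)
qed

end

theorem proposition2p1:
  fixes m :: nat and a :: real
  assumes "m \<ge> 2" and "0 < a" and "a < 1 / real m"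
  shows "fsg_vertices (Sigma_HC a m) =
           {follower (Sigma_HC a m) \<xi> | \<xi>. set \<xi> \<subseteq> {1..m}}
       \<and> fsg_edges {1..2*m} (Sigma_HC a m) =
           {(follower (Sigma_HC a m) \<xi>, i, follower (Sigma_HC a m) (\<xi> @ [i])) | \<xi> i.
               set \<xi> \<subseteq> {1..m} \<and> i \<in> {1..m}}
         \<union> {(follower (Sigma_HC a m) (\<xi> @ [i]), i + m, follower (Sigma_HC a m) \<xi>) | \<xi> i.
               set \<xi> \<subseteq> {1..m} \<and> i \<in> {1..m}}
         \<union> {(follower (Sigma_HC a m) [], i, follower (Sigma_HC a m) []) | i.
               i \<in> {m+1..2*m}}"
proof -
  interpret dyn a m using assms by unfold_locales
  interpret hcsys "Sigma_HC a m" m by (rule hc)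
  show ?thesis by (rule main)
qed

end
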